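(* Consider the game $\widehat{\mathcal{G}}_4$ described in the context. The strategy profile $\sigma^*$, in which all decoy voters apply for slot $s_2$ and all real voters apply for slot $s_1$, is a Nash equilibrium of $\widehat{\mathcal{G}}_4$.
   Context: There is a finite set $N$ of citizens partitioned into $\bar k>1$ districts $N_1,\dots,N_{\bar k}$; district $N_k$ contains $n_k^R\ge1$ real voters and $n_k^D$ decoy voters, $n_k^R+n_k^D>1$ (common knowledge; individual types private). Real voters value their ballot at $V>0$, decoy voters at $0$. Fix $1\le q\le\bar k-1$ and $\varepsilon>0$. Each citizen applies for slot $s_1$ or $s_2$. For district $k$ let $m_k$ be its number of $s_1$-applicants and $\rho_k=m_k/n_k^R$; let $\rho$ be the $q$-th smallest of $\rho_1,\dots,\rho_{\bar k}$, $C=\{k:\rho_k<\rho\}$, $T=\{k:\rho_k=\rho\}$, $c=|C|$, $t=|T|$; all districts in $C$ are selected and $q-c$ districts of $T$ are selected uniformly at random; the others are non-selected. Prices offered: $s_1$ in a selected district $V+\varepsilon$; $s_2$ in a selected district $2\varepsilon$; $s_1$ in a non-selected district $\varepsilon$; $s_2$ in a non-selected district $2\varepsilon$. Each applicant sells iff the price strictly exceeds his valuation, and the adversary must buy. Hence a decoy voter's payoff is the (expected) price offered to him, and a real voter's payoff is $V+\varepsilon$ if he applied for $s_1$ and his district is selected and $V$ otherwise. $\widehat{\mathcal{G}}_4$ is the simultaneous-move game in which each citizen chooses $s_1$ or $s_2$ with these expected payoffs. *)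

theory Defs
  imports Complex_Main
begin

datatype slot = S1 | S2

text \<open>Citizens are elements of a finite set N; d i is the district of citizen i
(districts are 1..kbar); R is the set of real voters (the others are decoys);
a strategy profile assigns a slot to each citizen.\<close>

definition n_real :: "'a set \<Rightarrow> ('a \<Rightarrow> nat) \<Rightarrow> 'a set \<Rightarrow> nat \<Rightarrow> nat" where
  "n_real N d R k = card {i\<in>N. d i = k \<and> i \<in> R}"

definition n_decoy :: "'a set \<Rightarrow> ('a \<Rightarrow> nat) \<Rightarrow> 'a set \<Rightarrow> nat \<Rightarrow> nat" where
  "n_decoy N d R k = card {i\<in>N. d i = k \<and> i \<notin> R}"

definition m_count :: "'a set \<Rightarrow> ('a \<Rightarrow> nat) \<Rightarrow> ('a \<Rightarrow> slot) \<Rightarrow> nat \<Rightarrow> nat" where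
  "m_count N d \<sigma> k = card {i\<in>N. d i = k \<and> \<sigma> i = S1}"

definition rho :: "'a set \<Rightarrow> ('a \<Rightarrow> nat) \<Rightarrow> 'a set \<Rightarrow> ('a \<Rightarrow> slot) \<Rightarrow> nat \<Rightarrow> real" where
  "rho N d R \<sigma> k = real (m_count N d \<sigma> k) / real (n_real N d R k)"

text \<open>The q-th smallest of rho_1, ..., rho_kbar (q is 1-based).\<close>
definition rho_q :: "nat \<Rightarrow> nat \<Rightarrow> 'a set \<Rightarrow> ('a \<Rightarrow> nat) \<Rightarrow> 'a set \<Rightarrow> ('a \<Rightarrow> slot) \<Rightarrow> real" where
  "rho_q kbar q N d R \<sigma> = sort (map (rho N d R \<sigma>) [1..<Suc kbar]) ! (q - 1)"

definition sel_prob :: "nat \<Rightarrow> nat \<Rightarrow> 'a set \<Rightarrow> ('a \<Rightarrow> nat) \<Rightarrow> 'a set \<Rightarrow> ('a \<Rightarrow> slot) \<Rightarrow> nat \<Rightarrow> real" where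
  "sel_prob kbar q N d R \<sigma> k =
     (let r = rho_q kbar q N d R \<sigma>;
          C = {j\<in>{1..kbar}. rho N d R \<sigma> j < r};
          T = {j\<in>{1..kbar}. rho N d R \<sigma> j = r}
      in if rho N d R \<sigma> k < r then 1
         else if rho N d R \<sigma> k = r then (real q - real (card C)) / real (card T)
         else 0)"

definition payoff :: "real \<Rightarrow> real \<Rightarrow> nat \<Rightarrow> nat \<Rightarrow> 'a set \<Rightarrow> ('a \<Rightarrow> nat) \<Rightarrow> 'a set
                       \<Rightarrow> ('a \<Rightarrow> slot) \<Rightarrow> 'a \<Rightarrow> real" where
  "payoff V \<epsilon> kbar q N d R \<sigma> i =
     (let p = sel_prob kbar q N d R \<sigma> (d i) in
      if i \<in> R then (if \<sigma> i = S1 then p * (V + \<epsilon>) + (1 - p) * V else V)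
      else (if \<sigma> i = S1 then p * (V + \<epsilon>) + (1 - p) * \<epsilon> else 2 * \<epsilon>))"

definition nash_eq :: "real \<Rightarrow> real \<Rightarrow> nat \<Rightarrow> nat \<Rightarrow> 'a set \<Rightarrow> ('a \<Rightarrow> nat) \<Rightarrow> 'a set
                       \<Rightarrow> ('a \<Rightarrow> slot) \<Rightarrow> bool" where
  "nash_eq V \<epsilon> kbar q N d R \<sigma> \<longleftrightarrow>
     (\<forall>i\<in>N. \<forall>a. payoff V \<epsilon> kbar q N d R (\<sigma>(i := a)) i \<le> payoff V \<epsilon> kbar q N d R \<sigma> i)"

end

theory Submission
  imports Defs "HOL-Library.Multiset"
begin
lemma sort_one_big:
  fixes f :: "nat \<Rightarrow> real"
  assumes "\<forall>j\<in>{1..kbar}. f j = (if j = k then x else 1)" "k \<in> {1..kbar}" "x > 1"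
  shows "sort (map f [1..<Suc kbar]) = replicate (kbar-1) 1 @ [x]"
proof -
  have sp: "[1..<Suc kbar] = [1..<k] @ k # [Suc k..<Suc kbar]"
  proof -
    have a: "1 \<le> k" "k \<le> Suc kbar" "k < Suc kbar" using assms(2) by auto
    have "[1..<Suc kbar] = [1..<k] @ [k..<Suc kbar]" using a upt_add_eq_append[of 1 k "Suc kbar - k"] by simp
    also have "[k..<Suc kbar] = k # [Suc k..<Suc kbar]" using a by (simp add: upt_conv_Cons)
    finally show ?thesis .
  qed
  have a: "map f [1..<k] = replicate (k-1) 1"
  proof -
    have "map f [1..<k] = map (\<lambda>_. 1) [1..<k]" using assms(1,2) by (intro map_cong) auto
    thus ?thesis by (simp del: upt_Suc add: map_replicate_const)
  qed
  have b: "map f [Suc k..<Suc kbar] = replicate (kbar-k) 1"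
  proof -
    have "map f [Suc k..<Suc kbar] = map (\<lambda>_. 1) [Suc k..<Suc kbar]" using assms(1,2) by (intro map_cong) auto
    thus ?thesis by (simp del: upt_Suc add: map_replicate_const)
  qed
  have c: "f k = x" using assms by auto
  have "mset (map f [1..<Suc kbar]) = mset (replicate (kbar-1) 1 @ [x])"
  proof -
    have r: "replicate (kbar-1) (1::real) = replicate (k-1) 1 @ replicate (kbar-k) 1"
      using assms(2) by (simp add: replicate_add[symmetric])
    have "map f [1..<Suc kbar] = replicate (k-1) 1 @ x # replicate (kbar-k) 1"
      unfolding sp by (simp only: map_append list.map a b c)
    then have "mset (map f [1..<Suc kbar]) = mset (replicate (k-1) 1 @ x # replicate (kbar-k) 1)" by (simp only:)
    thus ?thesis unfolding r by (simp add: ac_simps del: upt_Suc)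
  qed
  moreover have "sorted (replicate (kbar-1) (1::real) @ [x])"
    using assms(3) by (auto simp: sorted_append)
  ultimately show ?thesis by (intro properties_for_sort) auto
qed

lemma m0: "m_count N d (\<lambda>i. if i \<in> R then S1 else S2) k = n_real N d R k"
  unfolding m_count_def n_real_def by (rule arg_cong[where f=card]) auto

lemma m1:
  assumes "finite N" "i \<in> N" "i \<notin> R"
  shows "m_count N d ((\<lambda>i. if i \<in> R then S1 else S2)(i := S1)) k
         = n_real N d R k + (if k = d i then 1 else 0)"
proof -
  let ?A = "{j\<in>N. d j = k \<and> j \<in> R}"
  have fin: "finite ?A" using assms(1) by auto
  show ?thesis
  proof (cases "k = d i")
    case True
    have "{j\<in>N. d j = k \<and> ((\<lambda>i. if i \<in> R then S1 else S2)(i := S1)) j = S1} = insert i ?A"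
      using True assms by auto
    moreover have "i \<notin> ?A" using assms by auto
    ultimately show ?thesis using True fin unfolding m_count_def n_real_def by simp
  next
    case False
    have "{j\<in>N. d j = k \<and> ((\<lambda>i. if i \<in> R then S1 else S2)(i := S1)) j = S1} = ?A"
      using False assms by auto
    thus ?thesis using False unfolding m_count_def n_real_def by simp
  qed
qed

theorem proposition2:
  fixes N :: "'a set" and R :: "'a set" and d :: "'a \<Rightarrow> nat"
    and kbar q :: nat and V \<epsilon> :: real
  assumes "finite N" and "R \<subseteq> N" and "kbar > 1"
    and "\<forall>i\<in>N. d i \<in> {1..kbar}"
    and "\<forall>k\<in>{1..kbar}. n_real N d R k \<ge> 1"
    and "\<forall>k\<in>{1..kbar}. n_real N d R k + n_decoy N d R k > 1"
    and "1 \<le> q" and "q \<le> kbar - 1"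
    and "V > 0" and "\<epsilon> > 0"
  shows "nash_eq V \<epsilon> kbar q N d R (\<lambda>i. if i \<in> R then S1 else S2)"
proof -
  define s0 where "s0 = (\<lambda>i. if i \<in> R then S1 else S2)"
  have rho0: "\<forall>j\<in>{1..kbar}. rho N d R s0 j = 1"
    using assms(5) by (auto simp: rho_def s0_def m0)
  have map0: "map (rho N d R s0) [1..<Suc kbar] = replicate kbar 1"
  proof -
    have "map (rho N d R s0) [1..<Suc kbar] = map (\<lambda>_. 1) [1..<Suc kbar]"
      using rho0 by (intro map_cong) auto
    thus ?thesis by (simp del: upt_Suc add: map_replicate_const)
  qed
  have r0: "rho_q kbar q N d R s0 = 1"
    unfolding rho_q_def map0 using assms(7,8)
    by (simp add: sorted_sort_id)
  have p0: "sel_prob kbar q N d R s0 k \<ge> 0" if "k \<in> {1..kbar}" for k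
  proof -
    have C: "{j\<in>{1..kbar}. rho N d R s0 j < 1} = {}" using rho0 by auto
    have T: "{j\<in>{1..kbar}. rho N d R s0 j = 1} = {1..kbar}" using rho0 by auto
    show ?thesis unfolding sel_prob_def Let_def r0 C T using rho0 that by simp
  qed
  show ?thesis unfolding nash_eq_def s0_def[symmetric]
  proof (intro ballI allI)
    fix i a assume iN: "i \<in> N"
    have di: "d i \<in> {1..kbar}" using assms(4) iN by auto
    show "payoff V \<epsilon> kbar q N d R (s0(i := a)) i \<le> payoff V \<epsilon> kbar q N d R s0 i"
    proof (cases "a = s0 i")
      case True then show ?thesis by simp
    next
      case False
      show ?thesis
      proof (cases "i \<in> R")
        case True
        hence "a = S2" using False by (cases a) (auto simp: s0_def)
        have "0 \<le> sel_prob kbar q N d R s0 (d i) * \<epsilon>" using p0[OF di] assms(10) by simp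
        then show ?thesis using True \<open>a = S2\<close> unfolding payoff_def Let_def
          by (simp add: s0_def algebra_simps)
      next
        case iR: False
        hence aS1: "a = S1" using False by (cases a) (auto simp: s0_def)
        define s1 where "s1 = s0(i := S1)"
        define n where "n = n_real N d R (d i)"
        have n1: "n \<ge> 1" using assms(5) di n_def by auto
        define x where "x = real (n + 1) / real n"
        have x1: "x > 1" using n1 unfolding x_def by (simp add: field_simps)
        have rho1: "\<forall>j\<in>{1..kbar}. rho N d R s1 j = (if j = d i then x else 1)"
          using assms(5) m1[OF assms(1) iN iR] unfolding s1_def s0_def
          by (auto simp: rho_def x_def n_def)
        have srt: "sort (map (rho N d R s1) [1..<Suc kbar]) = replicate (kbar-1) 1 @ [x]"
          by (rule sort_one_big[OF rho1 di x1])
        have r1: "rho_q kbar q N d R s1 = 1"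
          proof -
          have "q - 1 < kbar - 1" using assms(7,8) by linarith
          thus ?thesis unfolding rho_q_def srt by (simp add: nth_append)
        qed
        have "sel_prob kbar q N d R s1 (d i) = 0"
          unfolding sel_prob_def Let_def r1 using rho1 di x1 by auto
        then show ?thesis using iR aS1 assms(10)
          by (simp add: payoff_def Let_def s1_def[symmetric]) (simp add: s0_def s1_def)
      qed
    qed
  qed
qed
end
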